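(* Let $\{\xi_k\}$ be the sequence of parameters produced by Algorithm DFNDFL (described in the context) applied to $\min\{f(x): x\in X\cap\mathcal{Z}\}$. Then $\lim_{k\to\infty}\xi_k=0$.
   Context: Setting. $\{1,\dots,n\}=I^c\cup I^z$, $I^c\cap I^z=\emptyset$; for $v\in\mathbb{R}^n$, $v_c=(v_i)_{i\in I^c}$, $v_z=(v_i)_{i\in I^z}$. $l,u\in\mathbb{R}^n$ finite, $l_i<u_i$, $l_i,u_i\in\mathbb{Z}$ for $i\in I^z$; $X=\{x:l\le x\le u\}$; $\mathcal{Z}=\{x:x_i\in\mathbb{Z}\ \forall i\in I^z\}$; $[x]_{[l,u]}=\max\{l,\min\{u,x\}\}$ componentwise; $\|\cdot\|$ Euclidean. $f:\mathbb{R}^n\to\mathbb{R}$ is Lipschitz w.r.t. continuous variables: $\exists L>0$, $|f(x)-f(y)|\le L\|x-y\|$ whenever $x_z=y_z$. A vector in $\mathbb{Z}^p$ is primitive if the gcd of its components is 1. For $x\in X\cap\mathcal{Z}$: $D^z(x)=\{d\in\mathbb{Z}^n: d_i=0\ (i\in I^c),\ d_z \text{ primitive},\ x+d\in X\cap\mathcal{Z}\}$; $D^c(x)=\{s\in\mathbb{R}^n: s_i=0\ (i\in I^z),\ s_i\ge0 \text{ if } i\in I^c, x_i=l_i,\ s_i\le 0 \text{ if } i\in I^c, x_i=u_i\}$. Procedures (data $\gamma>0$, $\delta\in(0,1)$). PCS$(\tilde\alpha,w,p)$: set $\alpha=\tilde\alpha$; if $f([w+\alpha p]_{[l,u]})\le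 f(w)-\gamma\alpha^2$ set $\tilde p=p$, else if $f([w-\alpha p]_{[l,u]})\le f(w)-\gamma\alpha^2$ set $\tilde p=-p$, else return $(0,p)$; then repeat: $\beta=\alpha/\delta$; if $f([w+\beta\tilde p]_{[l,u]})>f(w)-\gamma\beta^2$ return $(\alpha,\tilde p)$, else $\alpha=\beta$. DS$(\tilde\alpha,w,p,\xi)$: let $\bar\alpha$ be the largest $\alpha\ge0$ with $w+\alpha p\in X\cap\mathcal{Z}$, set $\alpha=\min\{\bar\alpha,\tilde\alpha\}$; if not ($\alpha>0$ and $f(w+\alpha p)\le f(w)-\xi$) return $0$; otherwise, while $\alpha<\bar\alpha$ and $f(w+\min\{\bar\alpha,2\alpha\}p)\le f(w)-\xi$, set $\alpha=\min\{\bar\alpha,2\alpha\}$; then return $\alpha$. Algorithm DFNDFL. Data: $x_0\in X\cap\mathcal{Z}$, $\xi_0>0$, $\theta\in(0,1)$; a sequence $\{s_k\}$ with $s_k\in D^c(x_0)$, $\|s_k\|=1$; $\tilde\alpha^c_0=1$; a set $D_0\subset D^z(x_0)$ with $\tilde\alpha^{(d)}_0=1$ for $d\in D_0$; $D:=D_0$ (tentative steps $\tilde\alpha^{(d)}$ not updated in an iteration keep their value). For $k=0,1,\dots$: Phase 1: $(\alpha^c_k,\tilde s_k)=$PCS$(\tilde\alpha^c_k,x_k,s_k)$; if $\alpha^c_k=0$ set $\tilde\alpha^c_{k+1}=\theta\tilde\alpha^c_k$, $\tilde x_k=x_k$; else $\tilde\alpha^c_{k+1}=\alpha^c_k$, $\tilde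 x_k=[x_k+\alpha^c_k\tilde s_k]_{[l,u]}$. Phase 2.A: set $y^+=\tilde x_k$; while $D\ne\emptyset$ and $y^+=\tilde x_k$: choose $d\in D$, set $D=D\setminus\{d\}$, $y=y^+$, $\alpha=$DS$(\tilde\alpha^{(d)}_k,y,d,\xi_k)$; if $\alpha=0$ set $y^+=y$, $\tilde\alpha^{(d)}_{k+1}=\max\{1,\lfloor\tilde\alpha^{(d)}_k/2\rfloor\}$; else $y^+=y+\alpha d$, $\tilde\alpha^{(d)}_{k+1}=\alpha$. Phase 2.B: if $y^+=\tilde x_k$ and the Discrete Search failed (returned $0$) with $\tilde\alpha^{(d)}_k=1$ for all $d\in D_k$, then set $\xi_{k+1}=\theta\xi_k$ and: if $D_k\supseteq D^z(\tilde x_k)$ set $D_{k+1}=D_k$; otherwise generate $D_{k+1}$ with $D_{k+1}\subseteq D^z(\tilde x_k)$, $D_{k+1}\supset D_k$ (strictly), and set $\tilde\alpha^{(d)}_{k+1}=1$ for $d\in D_{k+1}\setminus D_k$. Otherwise set $D_{k+1}=D_k$ and $\xi_{k+1}=\xi_k$. In all cases set $D=D_{k+1}$. Phase 3: choose any $x_{k+1}\in X\cap\mathcal{Z}$ with $f(x_{k+1})\le f(y^+)$. *)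

theory Defs
  imports "HOL-Analysis.Analysis"
begin

text \<open>Vectors live in real^'n (Euclidean norm); the index type 'n plays the role of
{1..n}, split into continuous indices Ic and integer indices Iz.\<close>

definition Xbox :: "real^'n \<Rightarrow> real^'n \<Rightarrow> (real^'n) set" where
  "Xbox l u = {x. \<forall>i. l$i \<le> x$i \<and> x$i \<le> u$i}"

definition Zset :: "'n set \<Rightarrow> (real^'n) set" where
  "Zset Iz = {x. \<forall>i\<in>Iz. x$i \<in> \<int>}"

definition proj :: "real^'n \<Rightarrow> real^'n \<Rightarrow> real^'n \<Rightarrow> real^'n" where
  "proj l u x = (\<chi> i. max (l$i) (min (u$i) (x$i)))"

definition Dz :: "'n set \<Rightarrow> 'n set \<Rightarrow> real^'n \<Rightarrow> real^'n \<Rightarrow> real^'n \<Rightarrow> (real^'n) set" where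
  "Dz Ic Iz l u x = {d. (\<forall>i. d$i \<in> \<int>) \<and> (\<forall>i\<in>Ic. d$i = 0)
      \<and> Gcd ((\<lambda>i. \<lfloor>d$i\<rfloor>) ` Iz) = 1 \<and> x + d \<in> Xbox l u \<inter> Zset Iz}"

definition Dc :: "'n set \<Rightarrow> 'n set \<Rightarrow> real^'n \<Rightarrow> real^'n \<Rightarrow> real^'n \<Rightarrow> (real^'n) set" where
  "Dc Ic Iz l u x = {s. (\<forall>i\<in>Iz. s$i = 0)
      \<and> (\<forall>i\<in>Ic. x$i = l$i \<longrightarrow> s$i \<ge> 0) \<and> (\<forall>i\<in>Ic. x$i = u$i \<longrightarrow> s$i \<le> 0)}"

text \<open>Projected Continuous Search.  The expansion loop returns tal/delta^j where j is the
least index such that the test fails at the next trial step tal/delta^(j+1).\<close>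
definition PCS :: "(real^'n \<Rightarrow> real) \<Rightarrow> real^'n \<Rightarrow> real^'n \<Rightarrow> real \<Rightarrow> real
    \<Rightarrow> real \<Rightarrow> real^'n \<Rightarrow> real^'n \<Rightarrow> real \<times> (real^'n)" where
  "PCS f l u \<gamma> \<delta> tal w p =
    (let ok = (\<lambda>a q. f (proj l u (w + a *\<^sub>R q)) \<le> f w - \<gamma> * a\<^sup>2) in
     if ok tal p then (tal / \<delta> ^ (LEAST j. \<not> ok (tal / \<delta> ^ Suc j) p), p)
     else if ok tal (-p) then (tal / \<delta> ^ (LEAST j. \<not> ok (tal / \<delta> ^ Suc j) (-p)), -p)
     else (0, p))"

text \<open>Discrete Search.  Starting from a0 = min abar tal, the iterates of
a := min abar (2a) are min abar (2^j a0); the loop stops at the least j for which the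
continuation test fails.\<close>
definition DS :: "(real^'n \<Rightarrow> real) \<Rightarrow> 'n set \<Rightarrow> real^'n \<Rightarrow> real^'n \<Rightarrow> real
    \<Rightarrow> real^'n \<Rightarrow> real^'n \<Rightarrow> real \<Rightarrow> real" where
  "DS f Iz l u tal w p \<xi> =
    (let abar = (GREATEST a. 0 \<le> a \<and> w + a *\<^sub>R p \<in> Xbox l u \<inter> Zset Iz);
         a0 = min abar tal;
         it = (\<lambda>j::nat. min abar (2 ^ j * a0));
         cont = (\<lambda>j. it j < abar \<and> f (w + it (Suc j) *\<^sub>R p) \<le> f w - \<xi>)
     in if \<not> (a0 > 0 \<and> f (w + a0 *\<^sub>R p) \<le> f w - \<xi>) then 0
        else it (LEAST j. \<not> cont j))"

fun phase2A :: "(real^'n \<Rightarrow> real) \<Rightarrow> 'n set \<Rightarrow> real^'n \<Rightarrow> real^'n \<Rightarrow> real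
    \<Rightarrow> real^'n \<Rightarrow> (real^'n \<Rightarrow> real) \<Rightarrow> (real^'n) list \<Rightarrow> (real^'n) \<times> (real^'n \<Rightarrow> real)" where
  "phase2A f Iz l u \<xi> y ta [] = (y, ta)"
| "phase2A f Iz l u \<xi> y ta (d # ds) =
    (let a = DS f Iz l u (ta d) y d \<xi> in
     if a = 0 then phase2A f Iz l u \<xi> y (ta(d := max 1 (of_int \<lfloor>ta d / 2\<rfloor>))) ds
     else (y + a *\<^sub>R d, ta(d := a)))"

text \<open>A run of DFNDFL: x k = x_k, xt k = tilde x_k, ac k = tilde alpha^c_k, xi k = xi_k,
D k = D_k, ta k d = tilde alpha^(d)_k, ord k = the order in which D_k is scanned in
Phase 2.A (any enumeration of D_k; the loop may stop early).\<close>
definition DFNDFL_run ::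
  "'n set \<Rightarrow> 'n set \<Rightarrow> real^'n \<Rightarrow> real^'n \<Rightarrow> (real^'n \<Rightarrow> real) \<Rightarrow> real \<Rightarrow> real \<Rightarrow> real
   \<Rightarrow> real^'n \<Rightarrow> real \<Rightarrow> (nat \<Rightarrow> real^'n) \<Rightarrow> (real^'n) set
   \<Rightarrow> (nat \<Rightarrow> real^'n) \<Rightarrow> (nat \<Rightarrow> real^'n) \<Rightarrow> (nat \<Rightarrow> real) \<Rightarrow> (nat \<Rightarrow> real)
   \<Rightarrow> (nat \<Rightarrow> (real^'n) set) \<Rightarrow> (nat \<Rightarrow> real^'n \<Rightarrow> real) \<Rightarrow> (nat \<Rightarrow> (real^'n) list) \<Rightarrow> bool"
where
  "DFNDFL_run Ic Iz l u f \<gamma> \<delta> \<theta> x0 \<xi>0 s D0 x xt ac xi D ta ord \<longleftrightarrow>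
     x 0 = x0 \<and> xi 0 = \<xi>0 \<and> ac 0 = 1 \<and> D 0 = D0 \<and> (\<forall>d\<in>D0. ta 0 d = 1) \<and>
     (\<forall>k.
       (let (a, st) = PCS f l u \<gamma> \<delta> (ac k) (x k) (s k) in
          if a = 0 then ac (Suc k) = \<theta> * ac k \<and> xt k = x k
          else ac (Suc k) = a \<and> xt k = proj l u (x k + a *\<^sub>R st))
       \<and> distinct (ord k) \<and> set (ord k) = D k
       \<and> (let (yp, ta') = phase2A f Iz l u (xi k) (xt k) (ta k) (ord k) in
           (if yp = xt k \<and> (\<forall>d\<in>D k. ta k d = 1) then
              xi (Suc k) = \<theta> * xi k \<and>
              (if Dz Ic Iz l u (xt k) \<subseteq> D k then D (Suc k) = D k \<and> ta (Suc k) = ta'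
               else D (Suc k) \<subseteq> Dz Ic Iz l u (xt k) \<and> D k \<subset> D (Suc k)
                    \<and> ta (Suc k) = (\<lambda>d. if d \<in> D (Suc k) - D k then 1 else ta' d))
            else D (Suc k) = D k \<and> xi (Suc k) = xi k \<and> ta (Suc k) = ta')
           \<and> x (Suc k) \<in> Xbox l u \<inter> Zset Iz \<and> f (x (Suc k)) \<le> f yp))"

end

theory Submission imports Defs begin

lemma least_gen:
  assumes "Q 0" and "\<And>j. C j \<Longrightarrow> Q (Suc j)"
  shows "Q (LEAST j. \<not> C j)"
proof (cases "LEAST j. \<not> C j")
  case 0 then show ?thesis using assms by simp
next
  case (Suc m)
  have "C m"
  proof (rule ccontr)
    assume "\<not> C m"
    then have "(LEAST j. \<not> C j) \<le> m" by (rule Least_le)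
    then show False using Suc by simp
  qed
  then show ?thesis using Suc assms by simp
qed

lemma PCS_dec:
  assumes "PCS f l u \<gamma> \<delta> tal w p = (a, st)" "a \<noteq> 0"
  shows "f (proj l u (w + a *\<^sub>R st)) \<le> f w - \<gamma> * a\<^sup>2"
proof -
  define ok where "ok = (\<lambda>a q. f (proj l u (w + a *\<^sub>R q)) \<le> f w - \<gamma> * a\<^sup>2)"
  have gen: "ok (tal / \<delta> ^ (LEAST j. \<not> ok (tal / \<delta> ^ Suc j) q)) q" if "ok tal q" for q
    using least_gen[where Q="\<lambda>j. ok (tal / \<delta> ^ j) q" and C="\<lambda>j. ok (tal / \<delta> ^ Suc j) q"] that
    by simp
  have eq: "PCS f l u \<gamma> \<delta> tal w p = (if ok tal p then (tal / \<delta> ^ (LEAST j. \<not> ok (tal / \<delta> ^ Suc j) p), p)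
     else if ok tal (-p) then (tal / \<delta> ^ (LEAST j. \<not> ok (tal / \<delta> ^ Suc j) (-p)), -p)
     else (0, p))" unfolding PCS_def ok_def Let_def ..
  show ?thesis
  proof (cases "ok tal p")
    case True
    have "(a, st) = PCS f l u \<gamma> \<delta> tal w p" by (rule assms(1)[symmetric])
    also have "\<dots> = (tal / \<delta> ^ (LEAST j. \<not> ok (tal / \<delta> ^ Suc j) p), p)" unfolding eq by (rule if_P[OF True])
    finally have "(a, st) = (tal / \<delta> ^ (LEAST j. \<not> ok (tal / \<delta> ^ Suc j) p), p)" .
    then show ?thesis using gen[of p] True unfolding ok_def by simp
  next
    case False
    show ?thesis
    proof (cases "ok tal (-p)")
      case True
      have "(a, st) = PCS f l u \<gamma> \<delta> tal w p" by (rule assms(1)[symmetric])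
      also have "\<dots> = (tal / \<delta> ^ (LEAST j. \<not> ok (tal / \<delta> ^ Suc j) (-p)), -p)" unfolding eq using False True by simp
      finally have "(a, st) = (tal / \<delta> ^ (LEAST j. \<not> ok (tal / \<delta> ^ Suc j) (-p)), -p)" .
      then show ?thesis using gen[of "-p"] True unfolding ok_def by simp
    next
      case False2: False
      have "(a, st) = (0, p)" using False False2 assms(1) eq by simp
      then show ?thesis using assms(2) by simp
    qed
  qed
qed

lemma DS_dec:
  assumes "DS f Iz l u tal w p \<xi> = a" "a \<noteq> 0"
  shows "f (w + a *\<^sub>R p) \<le> f w - \<xi>"
proof -
  define abar where "abar = (GREATEST a. 0 \<le> a \<and> w + a *\<^sub>R p \<in> Xbox l u \<inter> Zset Iz)"
  define a0 where "a0 = min abar tal"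
  define it where "it = (\<lambda>j::nat. min abar (2 ^ j * a0))"
  define cont where "cont = (\<lambda>j. it j < abar \<and> f (w + it (Suc j) *\<^sub>R p) \<le> f w - \<xi>)"
  have eq: "DS f Iz l u tal w p \<xi> = (if \<not> (a0 > 0 \<and> f (w + a0 *\<^sub>R p) \<le> f w - \<xi>) then 0
        else it (LEAST j. \<not> cont j))"
    unfolding DS_def abar_def Let_def a0_def it_def cont_def ..
  have c: "a0 > 0 \<and> f (w + a0 *\<^sub>R p) \<le> f w - \<xi>" using assms eq by (auto split: if_splits)
  then have a: "a = it (LEAST j. \<not> cont j)" using assms eq by simp
  have "it 0 = a0" unfolding it_def a0_def by simp
  then have "f (w + it (LEAST j. \<not> cont j) *\<^sub>R p) \<le> f w - \<xi>"
    using least_gen[where Q="\<lambda>j. f (w + it j *\<^sub>R p) \<le> f w - \<xi>" and C=cont] c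
    unfolding cont_def by auto
  then show ?thesis using a by simp
qed

lemma phase2A_cases:
  assumes "\<xi> > 0" "distinct ds"
  shows "f (fst (phase2A f Iz l u \<xi> y ta ds)) \<le> f y - \<xi> \<or>
    phase2A f Iz l u \<xi> y ta ds = (y, \<lambda>e. if e \<in> set ds then max 1 (of_int \<lfloor>ta e / 2\<rfloor>) else ta e)"
  using assms(2)
proof (induction ds arbitrary: ta)
  case Nil
  then show ?case by simp
next
  case (Cons d ds)
  show ?case
  proof (cases "DS f Iz l u (ta d) y d \<xi> = 0")
    case True
    have IH: "f (fst (phase2A f Iz l u \<xi> y (ta(d := max 1 (of_int \<lfloor>ta d / 2\<rfloor>))) ds)) \<le> f y - \<xi> \<or>
      phase2A f Iz l u \<xi> y (ta(d := max 1 (of_int \<lfloor>ta d / 2\<rfloor>))) ds = (y, \<lambda>e. if e \<in> set ds then max 1 (of_int \<lfloor>(ta(d := max 1 (of_int \<lfloor>ta d / 2\<rfloor>))) e / 2\<rfloor>) else (ta(d := max 1 (of_int \<lfloor>ta d / 2\<rfloor>))) e)"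
      using Cons by simp
    have fe: "(\<lambda>e. if e \<in> set ds then max 1 (of_int \<lfloor>(ta(d := max 1 (of_int \<lfloor>ta d / 2\<rfloor>))) e / 2\<rfloor>) else (ta(d := max 1 (of_int \<lfloor>ta d / 2\<rfloor>))) e)
       = (\<lambda>e. if e \<in> set (d # ds) then max 1 (of_int \<lfloor>ta e / 2\<rfloor>) else ta e)"
      using Cons.prems by (auto simp: fun_eq_iff)
    show ?thesis using IH True unfolding fe by (simp add: Let_def)
  next
    case False
    have "f (y + DS f Iz l u (ta d) y d \<xi> *\<^sub>R d) \<le> f y - \<xi>"
      using DS_dec[OF refl False] .
    then show ?thesis using False by (simp add: Let_def)
  qed
qed

lemma g_props:
  fixes t :: real
  shows "max 1 (of_int \<lfloor>t / 2\<rfloor>) \<in> \<int>" "max 1 (of_int \<lfloor>t / 2\<rfloor>) \<ge> (1::real)"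
proof -
  show "max 1 (of_int \<lfloor>t / 2\<rfloor>) \<in> \<int>" by (cases "1 \<le> (of_int \<lfloor>t / 2\<rfloor>::real)") (auto simp: max_def)
  show "max 1 (of_int \<lfloor>t / 2\<rfloor>) \<ge> (1::real)" by simp
qed

lemma g_le:
  fixes t :: real
  assumes "t \<in> \<int>" "t \<ge> 1"
  shows "max 1 (of_int \<lfloor>t / 2\<rfloor>) \<le> t" "t \<noteq> 1 \<Longrightarrow> max 1 (of_int \<lfloor>t / 2\<rfloor>) \<le> t - 1"
proof -
  obtain n where n: "t = of_int n" using assms(1) Ints_cases by blast
  have fl: "\<lfloor>real_of_int n / 2\<rfloor> = n div 2" using floor_divide_of_int_eq[of n 2] by simp
  have n1: "n \<ge> 1" using assms(2) n by simp
  show "max 1 (of_int \<lfloor>t / 2\<rfloor>) \<le> t" unfolding n fl using n1 by simp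
  show "max 1 (of_int \<lfloor>t / 2\<rfloor>) \<le> t - 1" if "t \<noteq> 1"
  proof -
    have "n \<ge> 2" using that n n1 by auto
    then have "n div 2 \<le> n - 1" by linarith
    then show ?thesis unfolding n fl using \<open>n \<ge> 2\<close> by simp
  qed
qed

lemma f_lower:
  fixes Iz :: "'n::finite set" and l u :: "real^'n" and f :: "real^'n \<Rightarrow> real" and L :: real
  assumes lip: "\<forall>y z. (\<forall>i\<in>Iz. y$i = z$i) \<longrightarrow> \<bar>f y - f z\<bar> \<le> L * norm (y - z)"
    and L: "L > 0"
  shows "\<exists>B. \<forall>y \<in> Xbox l u \<inter> Zset Iz. B \<le> f y"
proof -
  define Sf where "Sf i = (if i \<in> Iz then real_of_int ` {\<lceil>l$i\<rceil>..\<lfloor>u$i\<rfloor>} else {l$i})" for i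
  define Zf where "Zf = (\<lambda>g. \<chi> i. g i) ` (PiE UNIV Sf)"
  have finZ: "finite Zf" unfolding Zf_def by (intro finite_imageI finite_PiE) (auto simp: Sf_def)
  define zz where "zz y = (\<chi> i. if i \<in> Iz then y$i else l$i)" for y :: "real^'n"
  define C where "C = (\<Sum>i\<in>UNIV. u$i - l$i)"
  have "Min (f ` Zf) - L * C \<le> f y" if y: "y \<in> Xbox l u \<inter> Zset Iz" for y
  proof -
    have yb: "l$i \<le> y$i" "y$i \<le> u$i" for i using y by (auto simp: Xbox_def)
    have yi: "y$i \<in> \<int>" if "i \<in> Iz" for i using y that by (auto simp: Zset_def)
    have "(\<lambda>i. zz y $ i) \<in> PiE UNIV Sf"
    proof (auto simp: PiE_def Pi_def Sf_def zz_def)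
      fix i assume "i \<in> Iz"
      then obtain n where n: "y$i = of_int n" using yi Ints_cases by blast
      have "\<lceil>l$i\<rceil> \<le> n" using yb(1)[of i] n by (simp add: ceiling_le_iff)
      moreover have "n \<le> \<lfloor>u$i\<rfloor>" using yb(2)[of i] n by (simp add: le_floor_iff)
      ultimately show "y$i \<in> real_of_int ` {\<lceil>l$i\<rceil>..\<lfloor>u$i\<rfloor>}" using n by auto
    qed
    then have zin: "zz y \<in> Zf" unfolding Zf_def by (metis (no_types, lifting) image_eqI vec_lambda_eta)
    have lu: "l$i \<le> u$i" for i using yb[of i] by linarith
    have "norm (y - zz y) \<le> (\<Sum>i\<in>UNIV. \<bar>(y - zz y)$i\<bar>)" by (rule norm_le_l1_cart)
    also have "\<dots> \<le> C" unfolding C_def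
      by (intro sum_mono) (use yb lu in \<open>auto simp: zz_def\<close>)
    finally have nC: "norm (y - zz y) \<le> C" .
    have "\<bar>f y - f (zz y)\<bar> \<le> L * norm (y - zz y)" using lip by (auto simp: zz_def)
    also have "\<dots> \<le> L * C" using nC L by (simp add: mult_left_mono)
    finally have "f (zz y) - L * C \<le> f y" by linarith
    moreover have "Min (f ` Zf) \<le> f (zz y)" using finZ zin by simp
    ultimately show ?thesis by linarith
  qed
  then show ?thesis by blast
qed

theorem mainTheorem3:
  fixes Ic Iz :: "'n::finite set" and l u x0 :: "real^'n" and f :: "real^'n \<Rightarrow> real"
    and \<gamma> \<delta> \<theta> \<xi>0 L :: real and s :: "nat \<Rightarrow> real^'n" and D0 :: "(real^'n) set"
    and x xt :: "nat \<Rightarrow> real^'n" and ac xi :: "nat \<Rightarrow> real"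
    and D :: "nat \<Rightarrow> (real^'n) set" and ta :: "nat \<Rightarrow> real^'n \<Rightarrow> real"
    and ord :: "nat \<Rightarrow> (real^'n) list"
  assumes "Ic \<inter> Iz = {}" and "Ic \<union> Iz = UNIV"
    and "\<forall>i. l$i < u$i" and "\<forall>i\<in>Iz. l$i \<in> \<int> \<and> u$i \<in> \<int>"
    and "L > 0"
    and "\<forall>y z. (\<forall>i\<in>Iz. y$i = z$i) \<longrightarrow> \<bar>f y - f z\<bar> \<le> L * norm (y - z)"
    and "\<gamma> > 0" and "0 < \<delta>" and "\<delta> < 1"
    and "x0 \<in> Xbox l u \<inter> Zset Iz" and "\<xi>0 > 0" and "0 < \<theta>" and "\<theta> < 1"
    and "\<forall>k. s k \<in> Dc Ic Iz l u x0 \<and> norm (s k) = 1"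
    and "D0 \<subseteq> Dz Ic Iz l u x0"
    and "DFNDFL_run Ic Iz l u f \<gamma> \<delta> \<theta> x0 \<xi>0 s D0 x xt ac xi D ta ord"
  shows "xi \<longlonglongrightarrow> 0"
proof -
  note Rd = assms(16)[unfolded DFNDFL_run_def]
  have x00: "x 0 = x0" using Rd by (rule conjunct1)
  have xi0: "xi 0 = \<xi>0" using Rd[THEN conjunct2] by (rule conjunct1)
  note Rall = Rd[THEN conjunct2, THEN conjunct2, THEN conjunct2, THEN conjunct2, THEN conjunct2]
  define P where "P k = phase2A f Iz l u (xi k) (xt k) (ta k) (ord k)" for k
  define g :: "real \<Rightarrow> real" where "g t = max 1 (of_int \<lfloor>t / 2\<rfloor>)" for t
  have stepk: "(let (a, st) = PCS f l u \<gamma> \<delta> (ac k) (x k) (s k) in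
          if a = 0 then ac (Suc k) = \<theta> * ac k \<and> xt k = x k
          else ac (Suc k) = a \<and> xt k = proj l u (x k + a *\<^sub>R st))
       \<and> distinct (ord k) \<and> set (ord k) = D k
       \<and> (let (yp, ta') = P k in
           (if yp = xt k \<and> (\<forall>d\<in>D k. ta k d = 1) then
              xi (Suc k) = \<theta> * xi k \<and>
              (if Dz Ic Iz l u (xt k) \<subseteq> D k then D (Suc k) = D k \<and> ta (Suc k) = ta'
               else D (Suc k) \<subseteq> Dz Ic Iz l u (xt k) \<and> D k \<subset> D (Suc k)
                    \<and> ta (Suc k) = (\<lambda>d. if d \<in> D (Suc k) - D k then 1 else ta' d))
            else D (Suc k) = D k \<and> xi (Suc k) = xi k \<and> ta (Suc k) = ta')
           \<and> x (Suc k) \<in> Xbox l u \<inter> Zset Iz \<and> f (x (Suc k)) \<le> f yp)" for k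
    unfolding P_def by (rule Rall[rule_format])
  have pcs: "f (xt k) \<le> f (x k)" for k
  proof -
    obtain a st where pc: "PCS f l u \<gamma> \<delta> (ac k) (x k) (s k) = (a, st)"
      by (cases "PCS f l u \<gamma> \<delta> (ac k) (x k) (s k)") simp
    have c: "if a = 0 then ac (Suc k) = \<theta> * ac k \<and> xt k = x k
          else ac (Suc k) = a \<and> xt k = proj l u (x k + a *\<^sub>R st)"
      using stepk[of k] pc by simp
    show ?thesis
    proof (cases "a = 0")
      case True then show ?thesis using c by simp
    next
      case False
      then have "xt k = proj l u (x k + a *\<^sub>R st)" using c by simp
      moreover have "f (proj l u (x k + a *\<^sub>R st)) \<le> f (x k) - \<gamma> * a\<^sup>2" by (rule PCS_dec[OF pc False])
      moreover have "\<gamma> * a\<^sup>2 \<ge> 0" using assms(7) by simp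
      ultimately show ?thesis by simp
    qed
  qed
  have dist: "distinct (ord k)" "set (ord k) = D k" for k
    using stepk[of k, THEN conjunct2] by (rule conjunct1, rule conjunct1[OF conjunct2])
  have body: "(if fst (P k) = xt k \<and> (\<forall>d\<in>D k. ta k d = 1) then
              xi (Suc k) = \<theta> * xi k \<and>
              (if Dz Ic Iz l u (xt k) \<subseteq> D k then D (Suc k) = D k \<and> ta (Suc k) = snd (P k)
               else D (Suc k) \<subseteq> Dz Ic Iz l u (xt k) \<and> D k \<subset> D (Suc k)
                    \<and> ta (Suc k) = (\<lambda>d. if d \<in> D (Suc k) - D k then 1 else snd (P k) d))
            else D (Suc k) = D k \<and> xi (Suc k) = xi k \<and> ta (Suc k) = snd (P k))
           \<and> x (Suc k) \<in> Xbox l u \<inter> Zset Iz \<and> f (x (Suc k)) \<le> f (fst (P k))" for k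
  proof -
    have "let (yp, ta') = P k in
           (if yp = xt k \<and> (\<forall>d\<in>D k. ta k d = 1) then
              xi (Suc k) = \<theta> * xi k \<and>
              (if Dz Ic Iz l u (xt k) \<subseteq> D k then D (Suc k) = D k \<and> ta (Suc k) = ta'
               else D (Suc k) \<subseteq> Dz Ic Iz l u (xt k) \<and> D k \<subset> D (Suc k)
                    \<and> ta (Suc k) = (\<lambda>d. if d \<in> D (Suc k) - D k then 1 else ta' d))
            else D (Suc k) = D k \<and> xi (Suc k) = xi k \<and> ta (Suc k) = ta')
           \<and> x (Suc k) \<in> Xbox l u \<inter> Zset Iz \<and> f (x (Suc k)) \<le> f yp"
      using stepk[of k] by (rule conjunct2[OF conjunct2[OF conjunct2]])
    then show ?thesis unfolding Let_def case_prod_beta by assumption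
  qed
  have red: "xi (Suc k) = \<theta> * xi k" if "fst (P k) = xt k \<and> (\<forall>d\<in>D k. ta k d = 1)" for k
    using conjunct1[OF body[of k], unfolded if_P[OF that]] by (rule conjunct1)
  have nred: "D (Suc k) = D k \<and> xi (Suc k) = xi k \<and> ta (Suc k) = snd (P k)"
    if "\<not> (fst (P k) = xt k \<and> (\<forall>d\<in>D k. ta k d = 1))" for k
    using conjunct1[OF body[of k], unfolded if_not_P[OF that]] .
  have xin: "x (Suc k) \<in> Xbox l u \<inter> Zset Iz" and fyp: "f (x (Suc k)) \<le> f (fst (P k))" for k
    using body[of k] by blast+
  have xi_step: "xi (Suc k) = \<theta> * xi k \<or> xi (Suc k) = xi k" for k
    using red nred by blast
  have xi_pos: "xi k > 0" for k
  proof (induction k)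
    case 0 then show ?case using xi0 assms(11) by simp
  next
    case (Suc k) then show ?case using xi_step[of k] assms(12) by auto
  qed
  have phase: "f (fst (P k)) \<le> f (xt k) - xi k \<or> P k = (xt k, \<lambda>e. if e \<in> D k then g (ta k e) else ta k e)" for k
    using phase2A_cases[OF xi_pos[of k] dist(1)[of k], of f Iz l u "xt k" "ta k"] dist(2)[of k]
    unfolding P_def g_def by simp
  have fP: "f (fst (P k)) \<le> f (xt k)" for k using phase[of k] xi_pos[of k] by auto
  have fdec: "f (x (Suc k)) \<le> f (x k)" for k using fyp[of k] fP[of k] pcs[of k] by linarith
  have succ: "f (x (Suc k)) \<le> f (x k) - xi k" if "fst (P k) \<noteq> xt k" for k
    using phase[of k] that fyp[of k] pcs[of k] by auto
  have xall: "x k \<in> Xbox l u \<inter> Zset Iz" for k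
    using xin assms(10) x00 by (cases k) auto
  obtain B where B: "\<And>y. y \<in> Xbox l u \<inter> Zset Iz \<Longrightarrow> B \<le> f y"
    using f_lower[OF assms(6) assms(5), of l u] by blast
  have xidec: "xi n \<le> xi m" if "m \<le> n" for m n
  proof -
    have "decseq xi" by (rule decseq_SucI) (use xi_step xi_pos assms(12,13) in \<open>smt (verit) mult_le_cancel_right1\<close>)
    then show ?thesis using that by (simp add: decseq_def)
  qed
  have fxdec: "f (x n) \<le> f (x m)" if "m \<le> n" for m n
  proof -
    have "decseq (\<lambda>k. f (x k))" by (rule decseq_SucI) (use fdec in auto)
    then show ?thesis using that by (simp add: decseq_def)
  qed
  have infred: "\<exists>k\<ge>N. fst (P k) = xt k \<and> (\<forall>d\<in>D k. ta k d = 1)" for N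
  proof (rule ccontr)
    assume "\<not> ?thesis"
    then have nr: "\<And>k. k \<ge> N \<Longrightarrow> \<not> (fst (P k) = xt k \<and> (\<forall>d\<in>D k. ta k d = 1))" by auto
    have xiN: "xi k = xi N \<and> D k = D N" if "k \<ge> N" for k
      using that
    proof (induction k rule: dec_induct)
      case base then show ?case by simp
    next
      case (step k) then show ?case using nred[OF nr[of k]] by simp
    qed
    have "\<exists>M\<ge>N. \<forall>k\<ge>M. fst (P k) = xt k"
    proof (rule ccontr)
      assume "\<not> ?thesis"
      then have inf: "\<And>M. M \<ge> N \<Longrightarrow> \<exists>k\<ge>M. fst (P k) \<noteq> xt k" by auto
      have down: "\<exists>k\<ge>N. f (x k) \<le> f (x N) - real j * xi N" for j
      proof (induction j)
        case 0 show ?case by (rule exI[of _ N]) simp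
      next
        case (Suc j)
        then obtain k where k: "k \<ge> N" "f (x k) \<le> f (x N) - real j * xi N" by auto
        then obtain k' where k': "k' \<ge> k" "fst (P k') \<noteq> xt k'" using inf[OF k(1)] by blast
        have "f (x (Suc k')) \<le> f (x k') - xi k'" by (rule succ[OF k'(2)])
        moreover have "xi k' = xi N" using xiN[of k'] k k' by linarith
        moreover have "f (x k') \<le> f (x k)" using fxdec[OF k'(1)] .
        ultimately have "f (x (Suc k')) \<le> f (x N) - real j * xi N - xi N"
          using k by linarith
        then have "f (x (Suc k')) \<le> f (x N) - real (Suc j) * xi N"
          by (simp add: algebra_simps)
        moreover have "Suc k' \<ge> N" using k k' by simp
        ultimately show ?case by (intro exI[of _ "Suc k'"]) simp
      qed
      define j where "j = nat \<lceil>(f (x N) - B) / xi N\<rceil> + 1"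
      have "real j > (f (x N) - B) / xi N" unfolding j_def by linarith
      then have jj: "real j * xi N > f (x N) - B" using xi_pos[of N] by (simp add: pos_divide_less_eq)
      obtain k where "f (x k) \<le> f (x N) - real j * xi N" using down by blast
      then show False using B[OF xall[of k]] jj by linarith
    qed
    then obtain M where M: "M \<ge> N" "\<And>k. k \<ge> M \<Longrightarrow> fst (P k) = xt k" by blast
    have tastep: "ta (Suc k) = (\<lambda>e. if e \<in> D N then g (ta k e) else ta k e) \<and> (\<exists>d\<in>D N. ta k d \<noteq> 1)"
      if "k \<ge> M" for k
    proof -
      have kN: "k \<ge> N" using that M by simp
      have e1: "fst (P k) = xt k" using M that by simp
      have "P k = (xt k, \<lambda>e. if e \<in> D k then g (ta k e) else ta k e)"
        using phase[of k] e1 xi_pos[of k] by auto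
      then show ?thesis using nred[OF nr[OF kN]] nr[OF kN] e1 xiN[OF kN] by auto
    qed
    have intk: "ta k d \<in> \<int> \<and> ta k d \<ge> 1" if kk: "k \<ge> Suc M" "d \<in> D N" for k d
    proof -
      obtain k' where k': "k = Suc k'" "k' \<ge> M" using kk by (cases k) auto
      have "ta k d = g (ta k' d)" using tastep[OF k'(2)] kk k' by simp
      then show ?thesis using g_props unfolding g_def by simp
    qed
    have finD: "finite (D N)" using dist(2)[of N] by (metis List.finite_set)
    define S where "S k = (\<Sum>d\<in>D N. ta k d)" for k
    have Sdec: "S (Suc k) \<le> S k - 1" if "k \<ge> Suc M" for k
    proof -
      have kM: "k \<ge> M" using that by simp
      obtain d0 where d0: "d0 \<in> D N" "ta k d0 \<noteq> 1" using tastep[OF kM] by blast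
      have ts: "ta (Suc k) e = g (ta k e)" if "e \<in> D N" for e using tastep[OF kM] that by simp
      have "S (Suc k) = ta (Suc k) d0 + (\<Sum>d\<in>D N - {d0}. ta (Suc k) d)"
        unfolding S_def using finD d0(1) by (simp add: sum.remove)
      also have "\<dots> \<le> (ta k d0 - 1) + (\<Sum>d\<in>D N - {d0}. ta k d)"
      proof (rule add_mono)
        show "ta (Suc k) d0 \<le> ta k d0 - 1" using ts[OF d0(1)] intk[OF that d0(1)] g_le d0(2) unfolding g_def by simp
        show "(\<Sum>d\<in>D N - {d0}. ta (Suc k) d) \<le> (\<Sum>d\<in>D N - {d0}. ta k d)"
          by (rule sum_mono) (use ts intk[OF that] g_le in \<open>auto simp: g_def\<close>)
      qed
      also have "\<dots> = S k - 1" unfolding S_def using finD d0(1) by (simp add: sum.remove)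
      finally show ?thesis .
    qed
    have Sj: "S (Suc M + j) \<le> S (Suc M) - real j" for j
    proof (induction j)
      case 0 then show ?case by simp
    next
      case (Suc j)
      have "S (Suc (Suc M + j)) \<le> S (Suc M + j) - 1" by (rule Sdec) simp
      then show ?case using Suc by simp
    qed
    have Spos: "S k \<ge> 0" if "k \<ge> Suc M" for k
      unfolding S_def by (rule sum_nonneg) (use intk[OF that] in force)
    define j where "j = nat \<lceil>S (Suc M)\<rceil> + 1"
    have "real j > S (Suc M)" unfolding j_def by linarith
    then show False using Sj[of j] Spos[of "Suc M + j"] by simp
  qed
  have pw: "\<exists>k. xi k \<le> \<xi>0 * \<theta> ^ m" for m
  proof (induction m)
    case 0 then show ?case using xi0 by (intro exI[of _ 0]) simp
  next
    case (Suc m)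
    then obtain k where k: "xi k \<le> \<xi>0 * \<theta> ^ m" by blast
    obtain k' where k': "k' \<ge> k" "fst (P k') = xt k' \<and> (\<forall>d\<in>D k'. ta k' d = 1)" using infred by blast
    have "xi (Suc k') = \<theta> * xi k'" by (rule red[OF k'(2)])
    also have "\<dots> \<le> \<theta> * xi k" using xidec[OF k'(1)] assms(12) by simp
    also have "\<dots> \<le> \<theta> * (\<xi>0 * \<theta> ^ m)" using k assms(12) by simp
    finally show ?case by (intro exI[of _ "Suc k'"]) (simp add: algebra_simps)
  qed
  show ?thesis
  proof (rule LIMSEQ_I)
    fix r :: real assume r: "0 < r"
    obtain m where m: "\<theta> ^ m < r / \<xi>0" using real_arch_pow_inv[of "r / \<xi>0" \<theta>] r assms(11,13) by auto
    then have m': "\<xi>0 * \<theta> ^ m < r" using assms(11) by (simp add: less_divide_eq mult.commute)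
    obtain k where k: "xi k \<le> \<xi>0 * \<theta> ^ m" using pw by blast
    have "\<forall>n\<ge>k. norm (xi n - 0) < r"
    proof (intro allI impI)
      fix n assume "n \<ge> k"
      then have "xi n \<le> xi k" by (rule xidec)
      then show "norm (xi n - 0) < r" using xi_pos[of n] k m' by simp
    qed
    then show "\<exists>no. \<forall>n\<ge>no. norm (xi n - 0) < r" by blast
  qed
qed

end
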